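(* The following two statements are equivalent: (a) every nearly finitary matroid is $k$-nearly finitary for some $k\in\mathbb{N}$; (b) for every matroid $M$ that is not $k$-nearly finitary for any $k\in\mathbb{N}$, the near finitarization $M^{\mathrm{nfin}}$ is not a matroid.
   Context: Matroids (possibly infinite) $(E,\mathcal{L})$: $\emptyset\in\mathcal{L}$; subsets of independent sets independent; if $B$ is maximal and $A$ non-maximal in $\mathcal{L}$, then $A\cup\{b\}\in\mathcal{L}$ for some $b\in B\setminus A$; for $A\in\mathcal{L}$, $A\subseteq X\subseteq E$, $\{S\in\mathcal{L}:A\subseteq S\subseteq X\}$ has a maximal element. Bases are maximal independent sets. The finitarization $M^{\mathrm{fin}}=(E,\mathcal{L}^{\mathrm{fin}})$: sets all of whose finite subsets lie in $\mathcal{L}$. The near finitarization $M^{\mathrm{nfin}}=(E,\mathcal{L}^{\mathrm{nfin}})$ with $\mathcal{L}^{\mathrm{nfin}}=\{F\in\mathcal{L}^{\mathrm{fin}}:\exists S\in\mathcal{L},\ S\subseteq F,\ |F\setminus S|<\infty\}$. $M$ is nearly finitary if $F\setminus B$ is finite whenever a base $F$ of $M^{\mathrm{fin}}$ contains a base $B$ of $M$; $k$-nearly finitary if $|F\setminus B|\le k$ for all such pairs. *)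

theory Defs
  imports Main
begin

definition maximal_in :: "'a set set \<Rightarrow> 'a set \<Rightarrow> bool" where
  "maximal_in L B \<longleftrightarrow> B \<in> L \<and> (\<forall>C\<in>L. B \<subseteq> C \<longrightarrow> C = B)"

definition matroid :: "'a set \<Rightarrow> 'a set set \<Rightarrow> bool" where
  "matroid E L \<longleftrightarrow>
     (\<forall>I\<in>L. I \<subseteq> E) \<and>
     {} \<in> L \<and>
     (\<forall>A B. A \<in> L \<and> B \<subseteq> A \<longrightarrow> B \<in> L) \<and>
     (\<forall>A B. maximal_in L B \<and> A \<in> L \<and> \<not> maximal_in L A \<longrightarrow>
        (\<exists>b\<in>B - A. insert b A \<in> L)) \<and>
     (\<forall>A X. A \<in> L \<and> A \<subseteq> X \<and> X \<subseteq> E \<longrightarrow>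
        (\<exists>S. maximal_in {S \<in> L. A \<subseteq> S \<and> S \<subseteq> X} S))"

definition L_fin :: "'a set \<Rightarrow> 'a set set \<Rightarrow> 'a set set" where
  "L_fin E L = {F. F \<subseteq> E \<and> (\<forall>G. G \<subseteq> F \<and> finite G \<longrightarrow> G \<in> L)}"

definition L_nfin :: "'a set \<Rightarrow> 'a set set \<Rightarrow> 'a set set" where
  "L_nfin E L = {F \<in> L_fin E L. \<exists>S\<in>L. S \<subseteq> F \<and> finite (F - S)}"

definition nearly_finitary :: "'a set \<Rightarrow> 'a set set \<Rightarrow> bool" where
  "nearly_finitary E L \<longleftrightarrow>
     (\<forall>F B. maximal_in (L_fin E L) F \<and> maximal_in L B \<and> B \<subseteq> F \<longrightarrow> finite (F - B))"

definition k_nearly_finitary :: "nat \<Rightarrow> 'a set \<Rightarrow> 'a set set \<Rightarrow> bool" where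
  "k_nearly_finitary k E L \<longleftrightarrow>
     (\<forall>F B. maximal_in (L_fin E L) F \<and> maximal_in L B \<and> B \<subseteq> F \<longrightarrow>
        finite (F - B) \<and> card (F - B) \<le> k)"

end

theory Submission
  imports Defs
begin

lemma matroidD: assumes "matroid E L" shows
  "(\<forall>I\<in>L. I \<subseteq> E) \<and> {} \<in> L \<and> (\<forall>A B. A \<in> L \<and> B \<subseteq> A \<longrightarrow> B \<in> L) \<and>
  (\<forall>A B. maximal_in L B \<and> A \<in> L \<and> \<not> maximal_in L A \<longrightarrow>
        (\<exists>b\<in>B - A. insert b A \<in> L)) \<and>
  (\<forall>A X. A \<in> L \<and> A \<subseteq> X \<and> X \<subseteq> E \<longrightarrow>
        (\<exists>S. maximal_in {S \<in> L. A \<subseteq> S \<and> S \<subseteq> X} S))"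
  using assms unfolding matroid_def .
lemma m_sub: "matroid E L \<Longrightarrow> I \<in> L \<Longrightarrow> I \<subseteq> E"
  using matroidD[THEN conjunct1] by blast
lemma m_empty: "matroid E L \<Longrightarrow> {} \<in> L"
  using matroidD[THEN conjunct2, THEN conjunct1] by blast
lemma m_down: "matroid E L \<Longrightarrow> A \<in> L \<Longrightarrow> B \<subseteq> A \<Longrightarrow> B \<in> L"
  using matroidD[THEN conjunct2, THEN conjunct2, THEN conjunct1] by blast
lemma m_aug: "matroid E L \<Longrightarrow> maximal_in L B \<Longrightarrow> A \<in> L \<Longrightarrow> \<not> maximal_in L A \<Longrightarrow>
   \<exists>b\<in>B - A. insert b A \<in> L"
  using matroidD[THEN conjunct2, THEN conjunct2, THEN conjunct2, THEN conjunct1] by blast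
lemma m_max0: "matroid E L \<Longrightarrow> A \<in> L \<Longrightarrow> A \<subseteq> X \<Longrightarrow> X \<subseteq> E \<Longrightarrow>
   \<exists>S. maximal_in {S \<in> L. A \<subseteq> S \<and> S \<subseteq> X} S"
  using matroidD[THEN conjunct2, THEN conjunct2, THEN conjunct2, THEN conjunct2] by blast
lemma m_max: "matroid E L \<Longrightarrow> A \<in> L \<Longrightarrow> A \<subseteq> X \<Longrightarrow> X \<subseteq> E \<Longrightarrow>
   \<exists>S. S \<in> L \<and> A \<subseteq> S \<and> S \<subseteq> X \<and> (\<forall>T\<in>L. S \<subseteq> T \<longrightarrow> T \<subseteq> X \<longrightarrow> T = S)"
proof -
  assume a: "matroid E L" "A \<in> L" "A \<subseteq> X" "X \<subseteq> E"
  obtain S where "maximal_in {S \<in> L. A \<subseteq> S \<and> S \<subseteq> X} S" using m_max0[OF a] by blast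
  then have h: "S \<in> L" "A \<subseteq> S" "S \<subseteq> X" "\<forall>C\<in>{S \<in> L. A \<subseteq> S \<and> S \<subseteq> X}. S \<subseteq> C \<longrightarrow> C = S"
    unfolding maximal_in_def by simp_all
  have "\<forall>T\<in>L. S \<subseteq> T \<longrightarrow> T \<subseteq> X \<longrightarrow> T = S"
  proof (intro ballI impI)
    fix T assume "T \<in> L" "S \<subseteq> T" "T \<subseteq> X"
    then have "T \<in> {S \<in> L. A \<subseteq> S \<and> S \<subseteq> X}" using h(2) by auto
    then show "T = S" using h(4) \<open>S \<subseteq> T\<close> by blast
  qed
  then show ?thesis using h by blast
qed

lemma exists_base: assumes "matroid E L" "I \<in> L" shows "\<exists>B. maximal_in L B \<and> I \<subseteq> B"
proof -
  obtain S where S: "S \<in> L" "I \<subseteq> S" "S \<subseteq> E" "\<forall>T\<in>L. S \<subseteq> T \<longrightarrow> T \<subseteq> E \<longrightarrow> T = S"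
    using m_max[OF assms(1,2) m_sub[OF assms]] by blast
  then show ?thesis using m_sub[OF assms(1)] unfolding maximal_in_def by blast
qed

lemma base_extend: assumes "matroid E L" "I \<in> L" "maximal_in L B0"
  shows "\<exists>T. maximal_in L T \<and> I \<subseteq> T \<and> T \<subseteq> I \<union> B0"
proof -
  have "B0 \<in> L" using assms(3) maximal_in_def by blast
  then have "I \<union> B0 \<subseteq> E" using m_sub[OF assms(1)] assms(2) by blast
  then obtain S where S: "S \<in> L" "I \<subseteq> S" "S \<subseteq> I \<union> B0" "\<forall>T\<in>L. S \<subseteq> T \<longrightarrow> T \<subseteq> I \<union> B0 \<longrightarrow> T = S"
    using m_max[OF assms(1,2)] by blast
  have "maximal_in L S"
  proof (rule ccontr)
    assume "\<not> maximal_in L S"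
    then obtain b where "b \<in> B0 - S" "insert b S \<in> L" using m_aug[OF assms(1,3) S(1)] by blast
    then show False using S by blast
  qed
  then show ?thesis using S by blast
qed

lemma base_exchange:
  assumes m: "matroid E L" and "maximal_in L B1" "maximal_in L B2" "finite (B1 - B2)"
  shows "finite (B2 - B1) \<and> card (B2 - B1) \<le> card (B1 - B2)"
  using assms(2-4)
proof (induction "card (B1 - B2)" arbitrary: B1)
  case 0
  then have "B1 \<subseteq> B2" by auto
  then have "B2 = B1" using 0 unfolding maximal_in_def by blast
  then show ?case by simp
next
  case (Suc n)
  have "B1 - B2 \<noteq> {}" using Suc.hyps(2) by (metis card.empty nat.distinct(1))
  then obtain x where x: "x \<in> B1" "x \<notin> B2" by blast
  have B1L: "B1 \<in> L" using Suc.prems maximal_in_def by blast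
  have "B1 - {x} \<in> L" using m_down[OF m B1L] by blast
  moreover have "\<not> maximal_in L (B1 - {x})" using B1L x unfolding maximal_in_def by blast
  ultimately obtain y where y: "y \<in> B2 - (B1 - {x})" "insert y (B1 - {x}) \<in> L"
    using m_aug[OF m Suc.prems(2)] by blast
  have yx: "y \<noteq> x" using x y by blast
  then have yB1: "y \<notin> B1" using y by blast
  define B1' where "B1' = insert y (B1 - {x})"
  have mx: "maximal_in L B1'"
  proof (rule ccontr)
    assume "\<not> maximal_in L B1'"
    then obtain z where "z \<in> B1 - B1'" "insert z B1' \<in> L"
      using m_aug[OF m Suc.prems(1)] y B1'_def by blast
    moreover have "z = x" using \<open>z \<in> B1 - B1'\<close> B1'_def by blast
    moreover have "insert x B1' = insert y B1" using B1'_def x by blast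
    ultimately have "insert y B1 \<in> L" by simp
    then show False using Suc.prems(1) yB1 unfolding maximal_in_def by blast
  qed
  have eq: "B1' - B2 = (B1 - B2) - {x}" using B1'_def y by blast
  have "card (B1' - B2) = n" using eq Suc.hyps(2) x Suc.prems(3) by simp
  then have IH: "finite (B2 - B1') \<and> card (B2 - B1') \<le> n"
    using Suc.hyps(1)[of B1'] mx Suc.prems eq by simp
  have eq2: "B2 - B1 = insert y (B2 - B1')" using B1'_def y x by blast
  show ?case using IH eq2 Suc.hyps(2)
    by (simp add: card_insert_if)
qed

lemma restricted_exchange:
  assumes m: "matroid E L" and Y: "Y \<subseteq> E"
    and B: "B \<in> L" "B \<subseteq> Y" "\<forall>S\<in>L. B \<subseteq> S \<longrightarrow> S \<subseteq> Y \<longrightarrow> S = B"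
    and T: "T \<in> L" "T \<subseteq> Y" "\<forall>S\<in>L. T \<subseteq> S \<longrightarrow> S \<subseteq> Y \<longrightarrow> S = T"
    and fin: "finite (B - T)"
  shows "finite (T - B) \<and> card (T - B) \<le> card (B - T)"
proof -
  obtain T2 where T2: "maximal_in L T2" "T \<subseteq> T2" using exists_base[OF m T(1)] by blast
  have T2L: "T2 \<in> L" using T2 maximal_in_def by blast
  have T2Y: "T2 \<inter> Y = T"
  proof
    show "T2 \<inter> Y \<subseteq> T"
    proof
      fix y assume y: "y \<in> T2 \<inter> Y"
      have "insert y T \<in> L" using m_down[OF m T2L] y T2 by blast
      then have "insert y T = T" using T(3) y T(2) by blast
      then show "y \<in> T" by blast
    qed
    show "T \<subseteq> T2 \<inter> Y" using T2 T by blast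
  qed
  obtain B' where B': "maximal_in L B'" "B \<subseteq> B'" "B' \<subseteq> B \<union> T2" using base_extend[OF m B(1) T2(1)] by blast
  have B'L: "B' \<in> L" using B' maximal_in_def by blast
  have B'Y: "B' \<inter> Y = B"
  proof
    show "B' \<inter> Y \<subseteq> B"
    proof
      fix y assume y: "y \<in> B' \<inter> Y"
      have "insert y B \<in> L" using m_down[OF m B'L] y B' by blast
      then have "insert y B = B" using B(3) y B(2) by blast
      then show "y \<in> B" by blast
    qed
    show "B \<subseteq> B' \<inter> Y" using B' B by blast
  qed
  have s1: "B' - T2 \<subseteq> B - T" using B' T2 by blast
  then have f1: "finite (B' - T2)" using fin finite_subset by blast
  have ex: "finite (T2 - B') \<and> card (T2 - B') \<le> card (B' - T2)"
    using base_exchange[OF m B'(1) T2(1) f1] .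
  have s2: "T - B \<subseteq> T2 - B'" using T2 B'Y T(2) by blast
  have "finite (T - B)" using ex s2 finite_subset by blast
  moreover have "card (T - B) \<le> card (T2 - B')" using ex s2 by (simp add: card_mono)
  moreover have "card (B' - T2) \<le> card (B - T)" using s1 fin by (simp add: card_mono)
  ultimately show ?thesis using ex by linarith
qed

lemma aug_finite:
  assumes m: "matroid E L" and I: "I \<in> L" "finite I" and J: "J \<in> L" "finite J"
    and c: "card I < card J"
  shows "\<exists>j\<in>J - I. insert j I \<in> L"
proof (rule ccontr)
  assume no: "\<not> (\<exists>j\<in>J - I. insert j I \<in> L)"
  obtain BJ where BJ: "maximal_in L BJ" "J \<subseteq> BJ" using exists_base[OF m J(1)] by blast
  obtain I' where I': "maximal_in L I'" "I \<subseteq> I'" "I' \<subseteq> I \<union> BJ" using base_extend[OF m I(1) BJ(1)] by blast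
  have I'L: "I' \<in> L" using I' maximal_in_def by blast
  have s1: "J - I \<subseteq> BJ - I'"
  proof
    fix j assume j: "j \<in> J - I"
    have "j \<notin> I'"
    proof
      assume "j \<in> I'"
      then have "insert j I \<in> L" using m_down[OF m I'L] I' by blast
      then show False using no j by blast
    qed
    then show "j \<in> BJ - I'" using j BJ by blast
  qed
  have s2: "I' - BJ \<subseteq> I - J" using I' BJ by blast
  have f2: "finite (I - J)" using I by simp
  have f1: "finite (I' - BJ)" using s2 f2 finite_subset by blast
  have ex: "finite (BJ - I') \<and> card (BJ - I') \<le> card (I' - BJ)"
    using base_exchange[OF m I'(1) BJ(1) f1] .
  have "card (J - I) \<le> card (BJ - I')" using s1 ex by (simp add: card_mono)
  also have "\<dots> \<le> card (I' - BJ)" using ex by blast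
  also have "\<dots> \<le> card (I - J)" using s2 f2 by (simp add: card_mono)
  finally have "card (J - I) \<le> card (I - J)" .
  moreover have "card (J - I) = card J - card (J \<inter> I)" using J(2) by (simp add: card_Diff_subset_Int)
  moreover have "card (I - J) = card I - card (I \<inter> J)" using I(2) by (simp add: card_Diff_subset_Int)
  moreover have "card (J \<inter> I) \<le> card I" using I(2) by (simp add: card_mono)
  moreover have "card (I \<inter> J) = card (J \<inter> I)" by (simp add: Int_commute)
  ultimately show False using c by linarith
qed

lemma Lfin_down: "F \<in> L_fin E L \<Longrightarrow> G \<subseteq> F \<Longrightarrow> G \<in> L_fin E L"
  unfolding L_fin_def by blast
lemma Lfin_E: "F \<in> L_fin E L \<Longrightarrow> F \<subseteq> E"
  unfolding L_fin_def by blast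
lemma Lfin_fin: "F \<in> L_fin E L \<Longrightarrow> G \<subseteq> F \<Longrightarrow> finite G \<Longrightarrow> G \<in> L"
  unfolding L_fin_def by blast
lemma L_Lfin: "matroid E L \<Longrightarrow> I \<in> L \<Longrightarrow> I \<in> L_fin E L"
  unfolding L_fin_def using m_sub m_down by blast
lemma Lfin_I: "F \<subseteq> E \<Longrightarrow> (\<And>G. G \<subseteq> F \<Longrightarrow> finite G \<Longrightarrow> G \<in> L) \<Longrightarrow> F \<in> L_fin E L"
  unfolding L_fin_def by blast

lemma Lfin_zorn:
  assumes A: "A \<in> L_fin E L" "A \<subseteq> X" "X \<subseteq> E"
  shows "\<exists>F. F \<in> L_fin E L \<and> A \<subseteq> F \<and> F \<subseteq> X \<and> (\<forall>G\<in>L_fin E L. F \<subseteq> G \<longrightarrow> G \<subseteq> X \<longrightarrow> G = F)"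
proof -
  define AA where "AA = {S \<in> L_fin E L. A \<subseteq> S \<and> S \<subseteq> X}"
  have "\<forall>C\<in>chains AA. \<exists>U\<in>AA. \<forall>S\<in>C. S \<subseteq> U"
  proof
    fix C assume C: "C \<in> chains AA"
    show "\<exists>U\<in>AA. \<forall>S\<in>C. S \<subseteq> U"
    proof (cases "C = {}")
      case True
      have "A \<in> AA" using A unfolding AA_def by simp
      then show ?thesis using True by auto
    next
      case False
      have CA: "C \<subseteq> AA" using C unfolding chains_def by simp
      have ch: "subset.chain AA C" using C unfolding chains_alt_def by simp
      have CX: "\<And>S. S \<in> C \<Longrightarrow> S \<subseteq> X" using CA unfolding AA_def by auto
      have CL: "\<And>S. S \<in> C \<Longrightarrow> S \<in> L_fin E L" using CA unfolding AA_def by auto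
      have "\<Union>C \<in> L_fin E L"
      proof (rule Lfin_I)
        show "\<Union>C \<subseteq> E" using CX A(3) by auto
        fix G assume G: "G \<subseteq> \<Union>C" "finite G"
        obtain S where S: "S \<in> C" "G \<subseteq> S"
          using finite_subset_Union_chain[OF G(2) G(1) False ch] by metis
        show "G \<in> L" using Lfin_fin[OF CL[OF S(1)] S(2) G(2)] .
      qed
      moreover obtain S0 where "S0 \<in> C" using False by auto
      then have "A \<subseteq> \<Union>C" using CA unfolding AA_def by auto
      moreover have "\<Union>C \<subseteq> X" using CX by auto
      ultimately have "\<Union>C \<in> AA" unfolding AA_def by simp
      then show ?thesis by auto
    qed
  qed
  then obtain F where F: "F \<in> AA" "\<forall>G\<in>AA. F \<subseteq> G \<longrightarrow> G = F" using Zorn_Lemma2[of AA] by auto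
  then have "F \<in> L_fin E L" "A \<subseteq> F" "F \<subseteq> X" unfolding AA_def by auto
  moreover have "\<forall>G\<in>L_fin E L. F \<subseteq> G \<longrightarrow> G \<subseteq> X \<longrightarrow> G = F"
  proof (intro ballI impI)
    fix G assume "G \<in> L_fin E L" "F \<subseteq> G" "G \<subseteq> X"
    then have "G \<in> AA" using \<open>A \<subseteq> F\<close> unfolding AA_def by auto
    then show "G = F" using F(2) \<open>F \<subseteq> G\<close> by auto
  qed
  ultimately show ?thesis by auto
qed

lemma not_Lfin_witness:
  assumes "F \<subseteq> E" "F \<notin> L_fin E L"
  shows "\<exists>G. G \<subseteq> F \<and> finite G \<and> G \<notin> L"
  using assms unfolding L_fin_def by auto

lemma lemmaC:
  assumes m: "matroid E L"
    and F': "F' \<in> L_fin E L" "\<forall>G\<in>L_fin E L. F' \<subseteq> G \<longrightarrow> G = F'"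
    and B: "B \<in> L" "B \<subseteq> F'" "\<forall>S\<in>L. B \<subseteq> S \<longrightarrow> S \<subseteq> F' \<longrightarrow> S = B"
  shows "maximal_in L B"
proof (rule ccontr)
  assume nm: "\<not> maximal_in L B"
  obtain B0 where B0: "maximal_in L B0" "B \<subseteq> B0" using exists_base[OF m B(1)] by blast
  have B0L: "B0 \<in> L" using B0 maximal_in_def by blast
  have "B0 \<noteq> B" using B0 nm by blast
  then obtain e where e: "e \<in> B0" "e \<notin> B" using B0(2) by blast
  have eF: "e \<notin> F'"
  proof
    assume "e \<in> F'"
    moreover have "insert e B \<in> L" using m_down[OF m B0L] e B0(2) by blast
    ultimately have "insert e B = B" using B(3) B(2) by blast
    then show False using e by blast
  qed
  have eE: "e \<in> E" using m_sub[OF m B0L] e by blast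
  have F'E: "F' \<subseteq> E" using Lfin_E[OF F'(1)] .
  have "insert e F' \<notin> L_fin E L"
  proof
    assume "insert e F' \<in> L_fin E L"
    then have "insert e F' = F'" using F'(2) by blast
    then show False using eF by blast
  qed
  then obtain G where G: "G \<subseteq> insert e F'" "finite G" "G \<notin> L"
    using not_Lfin_witness[of "insert e F'" E L] eE F'E by blast
  have GeL: "G - {e} \<in> L" using Lfin_fin[OF F'(1)] G by blast
  define Y where "Y = B \<union> (G - {e})"
  have YF: "Y \<subseteq> F'" using Y_def B(2) G(1) by blast
  have YE: "Y \<subseteq> E" using YF F'E by blast
  have Bmax: "\<forall>S\<in>L. B \<subseteq> S \<longrightarrow> S \<subseteq> Y \<longrightarrow> S = B" using B(3) YF by blast
  obtain T1 where T1: "T1 \<in> L" "G - {e} \<subseteq> T1" "T1 \<subseteq> Y" "\<forall>T\<in>L. T1 \<subseteq> T \<longrightarrow> T \<subseteq> Y \<longrightarrow> T = T1"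
    using m_max[OF m GeL _ YE] Y_def by blast
  obtain T2 where T2: "maximal_in L T2" "T1 \<subseteq> T2" "T2 \<subseteq> T1 \<union> B0"
    using base_extend[OF m T1(1) B0(1)] by blast
  have T2L: "T2 \<in> L" using T2 maximal_in_def by blast
  have eT2: "e \<notin> T2"
  proof
    assume "e \<in> T2"
    then have "G \<subseteq> T2" using T1(2) T2(2) by blast
    then show False using m_down[OF m T2L] G(3) by blast
  qed
  have T2Y: "T2 \<inter> Y \<subseteq> T1"
  proof
    fix y assume y: "y \<in> T2 \<inter> Y"
    have "insert y T1 \<in> L" using m_down[OF m T2L] y T2(2) by blast
    then have "insert y T1 = T1" using T1(4) y T1(3) by blast
    then show "y \<in> T1" by blast
  qed
  have s1: "T2 - B0 \<subseteq> T1 - B" using T2(3) B0(2) by blast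
  have s0: "T1 - B \<subseteq> G - {e}" using T1(3) Y_def by blast
  have f0: "finite (T1 - B)" using finite_subset[OF s0] G(2) by simp
  have f1: "finite (T2 - B0)" using finite_subset[OF s1 f0] .
  have ex: "finite (B0 - T2) \<and> card (B0 - T2) \<le> card (T2 - B0)"
    using base_exchange[OF m T2(1) B0(1) f1] .
  have Bsub: "B \<subseteq> Y" using Y_def by blast
  have s2: "insert e (B - T1) \<subseteq> B0 - T2"
  proof
    fix z assume z: "z \<in> insert e (B - T1)"
    show "z \<in> B0 - T2"
    proof (cases "z = e")
      case True then show ?thesis using e eT2 by simp
    next
      case False
      then have "z \<in> B" "z \<notin> T1" using z by auto
      then show ?thesis using B0(2) T2Y Bsub by blast
    qed
  qed
  have f2: "finite (B - T1)" using finite_subset[OF s2] ex by simp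
  have "card (insert e (B - T1)) \<le> card (B0 - T2)" using s2 ex by (simp add: card_mono)
  then have c1: "card (B - T1) + 1 \<le> card (B0 - T2)" using f2 e by simp
  have c2: "card (T2 - B0) \<le> card (T1 - B)" using s1 f0 by (simp add: card_mono)
  have c3: "card (T1 - B) \<le> card (B - T1)"
    using restricted_exchange[OF m YE B(1) Bsub Bmax T1(1) T1(3) T1(4) f2] by blast
  show False using c1 c2 c3 ex by linarith
qed

lemma Lfin_aug:
  assumes m: "matroid E L"
    and B: "B \<in> L_fin E L" "\<forall>G\<in>L_fin E L. B \<subseteq> G \<longrightarrow> G = B"
    and A: "A \<in> L_fin E L" and x: "x \<notin> A" "insert x A \<in> L_fin E L"
  shows "\<exists>b\<in>B - A. insert b A \<in> L_fin E L"
proof (rule ccontr)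
  assume no: "\<not> (\<exists>b\<in>B - A. insert b A \<in> L_fin E L)"
  have AE: "A \<subseteq> E" using Lfin_E[OF A] .
  have BE: "B \<subseteq> E" using Lfin_E[OF B(1)] .
  have wit: "\<exists>G. G \<subseteq> insert b A \<and> finite G \<and> G \<notin> L" if "b \<in> B - A" for b
  proof -
    have "insert b A \<subseteq> E" using that AE BE by blast
    moreover have "insert b A \<notin> L_fin E L" using no that by blast
    ultimately show ?thesis using not_Lfin_witness by blast
  qed
  define Gf where "Gf b = (SOME G. G \<subseteq> insert b A \<and> finite G \<and> G \<notin> L)" for b
  have Gf: "Gf b \<subseteq> insert b A" "finite (Gf b)" "Gf b \<notin> L" if "b \<in> B - A" for b
    using someI_ex[OF wit[OF that]] unfolding Gf_def by blast+
  have xB: "x \<notin> B" using no x by blast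
  have xE: "x \<in> E" using Lfin_E[OF x(2)] by blast
  have "insert x B \<notin> L_fin E L"
  proof
    assume "insert x B \<in> L_fin E L"
    then have "insert x B = B" using B(2) by blast
    then show False using xB by blast
  qed
  then obtain D where D: "D \<subseteq> insert x B" "finite D" "D \<notin> L"
    using not_Lfin_witness[of "insert x B" E L] xE BE by blast
  have DxL: "D - {x} \<in> L" using Lfin_fin[OF B(1)] D by blast
  have xD: "x \<in> D"
  proof (rule ccontr)
    assume "x \<notin> D"
    then have "D - {x} = D" by simp
    then show False using DxL D(3) by simp
  qed
  define P where "P = (D - {x}) - A"
  have finP: "finite P" using D(2) P_def by simp
  have PBA: "P \<subseteq> B - A" using P_def D(1) by blast
  define Y where "Y = (D \<inter> A) \<union> (\<Union>b\<in>P. Gf b - {b})"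
  have finY: "finite Y" unfolding Y_def using D(2) finP Gf(2) PBA by auto
  have YA: "Y \<subseteq> A" unfolding Y_def using Gf(1) PBA by blast
  have xY: "x \<notin> Y" using YA x(1) by blast
  have IL: "insert x Y \<in> L" using Lfin_fin[OF x(2)] YA finY by blast
  have YL: "Y \<in> L" using m_down[OF m IL] by blast
  define Z where "Z = Y \<union> D"
  have finZ: "finite Z" using finY D(2) Z_def by simp
  have ZE: "Z \<subseteq> E" using Z_def YA AE D(1) xE BE by blast
  have DZ: "D - {x} \<subseteq> Z" using Z_def by blast
  obtain T where T: "T \<in> L" "D - {x} \<subseteq> T" "T \<subseteq> Z" "\<forall>S\<in>L. T \<subseteq> S \<longrightarrow> S \<subseteq> Z \<longrightarrow> S = T"
    using m_max[OF m DxL DZ ZE] by blast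
  have xT: "x \<notin> T"
  proof
    assume "x \<in> T"
    then have "D \<subseteq> T" using T(2) by blast
    then show False using m_down[OF m T(1)] D(3) by blast
  qed
  have finT: "finite T" using finite_subset[OF T(3) finZ] .
  have c1: "card (insert x Y) \<le> card T"
  proof (rule ccontr)
    assume "\<not> card (insert x Y) \<le> card T"
    then have "card T < card (insert x Y)" by simp
    then obtain i where i: "i \<in> insert x Y - T" "insert i T \<in> L"
      using aug_finite[OF m T(1) finT IL] finY by auto
    have "insert i T \<subseteq> Z" using i T(3) Z_def xD by blast
    then have "insert i T = T" using T(4) i(2) by blast
    then show False using i by blast
  qed
  have c2: "card T \<le> card Y"
  proof (rule ccontr)
    assume "\<not> card T \<le> card Y"
    then have "card Y < card T" by simp
    then obtain t where t: "t \<in> T - Y" "insert t Y \<in> L"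
      using aug_finite[OF m YL finY T(1) finT] by auto
    have tD: "t \<in> D" using t T(3) Z_def by blast
    have tx: "t \<noteq> x" using t xT by blast
    have tA: "t \<notin> A"
    proof
      assume "t \<in> A"
      then have "t \<in> Y" using tD Y_def by blast
      then show False using t by blast
    qed
    have tP: "t \<in> P" using tD tx tA P_def by blast
    have "Gf t - {t} \<subseteq> Y" using tP Y_def by blast
    then have "Gf t \<subseteq> insert t Y" by blast
    then have "Gf t \<in> L" using m_down[OF m t(2)] by blast
    then show False using Gf(3) tP PBA by blast
  qed
  have "card (insert x Y) = card Y + 1" using finY xY by simp
  then show False using c1 c2 by linarith
qed

lemma nfin_Lfin: "F \<in> L_nfin E L \<Longrightarrow> F \<in> L_fin E L"
  unfolding L_nfin_def by simp
lemma nfin_wit: "F \<in> L_nfin E L \<Longrightarrow> \<exists>S\<in>L. S \<subseteq> F \<and> finite (F - S)"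
  unfolding L_nfin_def by simp
lemma nfin_I: "F \<in> L_fin E L \<Longrightarrow> S \<in> L \<Longrightarrow> S \<subseteq> F \<Longrightarrow> finite (F - S) \<Longrightarrow> F \<in> L_nfin E L"
  unfolding L_nfin_def by blast
lemma nfin_ext:
  assumes "F \<in> L_nfin E L" "G \<in> L_fin E L" "F \<subseteq> G" "finite (G - F)"
  shows "G \<in> L_nfin E L"
proof -
  obtain S where S: "S \<in> L" "S \<subseteq> F" "finite (F - S)" using nfin_wit[OF assms(1)] by blast
  have "G - S \<subseteq> (G - F) \<union> (F - S)" by blast
  then have "finite (G - S)" using S(3) assms(4) finite_subset by auto
  then show ?thesis using nfin_I[OF assms(2) S(1)] S(2) assms(3) by blast
qed
lemma nfin_insert: "F \<in> L_nfin E L \<Longrightarrow> insert x F \<in> L_fin E L \<Longrightarrow> insert x F \<in> L_nfin E L"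
proof -
  assume a: "F \<in> L_nfin E L" "insert x F \<in> L_fin E L"
  have "finite (insert x F - F)" by (rule finite_subset[of _ "{x}"]) auto
  then show ?thesis using nfin_ext[OF a(1) a(2)] by blast
qed

lemma nfin_down:
  assumes m: "matroid E L" and "F \<in> L_nfin E L" "G \<subseteq> F"
  shows "G \<in> L_nfin E L"
proof -
  obtain S where S: "S \<in> L" "S \<subseteq> F" "finite (F - S)" using nfin_wit[OF assms(2)] by blast
  have GS: "G \<inter> S \<in> L" using m_down[OF m S(1)] by blast
  have "G - (G \<inter> S) \<subseteq> F - S" using assms(3) by blast
  then have "finite (G - (G \<inter> S))" using S(3) finite_subset by blast
  moreover have "G \<in> L_fin E L" using Lfin_down[OF nfin_Lfin[OF assms(2)] assms(3)] .
  ultimately show ?thesis using nfin_I GS by blast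
qed

lemma nf_imp_nfin_matroid:
  assumes m: "matroid E L" and nf: "nearly_finitary E L"
  shows "matroid E (L_nfin E L)"
proof -
  have c1: "\<forall>I\<in>L_nfin E L. I \<subseteq> E" using Lfin_E nfin_Lfin by blast
  have eL: "{} \<in> L" using m_empty[OF m] .
  have c2: "{} \<in> L_nfin E L" using nfin_I[OF L_Lfin[OF m eL] eL] by simp
  have c3: "\<forall>A B. A \<in> L_nfin E L \<and> B \<subseteq> A \<longrightarrow> B \<in> L_nfin E L" using nfin_down[OF m] by blast
  have c4: "\<forall>A B. maximal_in (L_nfin E L) B \<and> A \<in> L_nfin E L \<and> \<not> maximal_in (L_nfin E L) A \<longrightarrow>
        (\<exists>b\<in>B - A. insert b A \<in> L_nfin E L)"
  proof (intro allI impI, elim conjE)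
    fix A B assume Bm: "maximal_in (L_nfin E L) B" and A: "A \<in> L_nfin E L"
      and An: "\<not> maximal_in (L_nfin E L) A"
    have BN: "B \<in> L_nfin E L" using Bm maximal_in_def by blast
    have BF: "B \<in> L_fin E L" using nfin_Lfin[OF BN] .
    have Bmax: "\<forall>G\<in>L_fin E L. B \<subseteq> G \<longrightarrow> G = B"
    proof (intro ballI impI)
      fix G assume G: "G \<in> L_fin E L" "B \<subseteq> G"
      show "G = B"
      proof (rule ccontr)
        assume "G \<noteq> B"
        then obtain y where y: "y \<in> G" "y \<notin> B" using G by blast
        have "insert y B \<in> L_fin E L" using Lfin_down[OF G(1)] y G(2) by blast
        then have "insert y B \<in> L_nfin E L" using nfin_insert[OF BN] by blast
        then have "insert y B = B" using Bm unfolding maximal_in_def by blast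
        then show False using y by blast
      qed
    qed
    obtain C where C: "C \<in> L_nfin E L" "A \<subseteq> C" "C \<noteq> A" using An A unfolding maximal_in_def by blast
    then obtain x where x: "x \<in> C" "x \<notin> A" by blast
    have xA: "insert x A \<in> L_fin E L" using Lfin_down[OF nfin_Lfin[OF C(1)]] x C(2) by blast
    obtain b where b: "b \<in> B - A" "insert b A \<in> L_fin E L"
      using Lfin_aug[OF m BF Bmax nfin_Lfin[OF A] x(2) xA] by blast
    have "insert b A \<in> L_nfin E L" using nfin_insert[OF A b(2)] .
    then show "\<exists>b\<in>B - A. insert b A \<in> L_nfin E L" using b by blast
  qed
  have c5: "\<forall>A X. A \<in> L_nfin E L \<and> A \<subseteq> X \<and> X \<subseteq> E \<longrightarrow>
        (\<exists>S. maximal_in {S \<in> L_nfin E L. A \<subseteq> S \<and> S \<subseteq> X} S)"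
  proof (intro allI impI, elim conjE)
    fix A X assume A: "A \<in> L_nfin E L" and AX: "A \<subseteq> X" and XE: "X \<subseteq> E"
    obtain F where F: "F \<in> L_fin E L" "A \<subseteq> F" "F \<subseteq> X" "\<forall>G\<in>L_fin E L. F \<subseteq> G \<longrightarrow> G \<subseteq> X \<longrightarrow> G = F"
      using Lfin_zorn[OF nfin_Lfin[OF A] AX XE] by blast
    have FE: "F \<subseteq> E" using F(3) XE by blast
    obtain F' where F': "F' \<in> L_fin E L" "F \<subseteq> F'" "F' \<subseteq> E" "\<forall>G\<in>L_fin E L. F' \<subseteq> G \<longrightarrow> G \<subseteq> E \<longrightarrow> G = F'"
      using Lfin_zorn[OF F(1) FE order_refl] by blast
    have F'max: "\<forall>G\<in>L_fin E L. F' \<subseteq> G \<longrightarrow> G = F'" using F'(4) Lfin_E by blast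
    have F'm: "maximal_in (L_fin E L) F'" unfolding maximal_in_def using F'(1) F'max by blast
    obtain I where I: "I \<in> L" "{} \<subseteq> I" "I \<subseteq> F" "\<forall>T\<in>L. I \<subseteq> T \<longrightarrow> T \<subseteq> F \<longrightarrow> T = I"
      using m_max[OF m eL _ FE] by blast
    have IF': "I \<subseteq> F'" using I(3) F'(2) by blast
    obtain B where B: "B \<in> L" "I \<subseteq> B" "B \<subseteq> F'" "\<forall>T\<in>L. B \<subseteq> T \<longrightarrow> T \<subseteq> F' \<longrightarrow> T = B"
      using m_max[OF m I(1) IF' F'(3)] by blast
    have Bm: "maximal_in L B" using lemmaC[OF m F'(1) F'max B(1) B(3) B(4)] .
    have finFB: "finite (F' - B)" using nf F'm Bm B(3) unfolding nearly_finitary_def by blast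
    have BFI: "B \<inter> F \<subseteq> I"
    proof
      fix y assume y: "y \<in> B \<inter> F"
      have "insert y I \<in> L" using m_down[OF m B(1)] y B(2) by blast
      then have "insert y I = I" using I(4) y I(3) by blast
      then show "y \<in> I" by blast
    qed
    have "F - I \<subseteq> F' - B" using BFI F'(2) by blast
    then have "finite (F - I)" using finFB finite_subset by blast
    then have FN: "F \<in> L_nfin E L" using nfin_I[OF F(1) I(1) I(3)] by blast
    have "maximal_in {S \<in> L_nfin E L. A \<subseteq> S \<and> S \<subseteq> X} F"
      unfolding maximal_in_def
    proof (intro conjI ballI impI)
      show "F \<in> {S \<in> L_nfin E L. A \<subseteq> S \<and> S \<subseteq> X}" using FN F by blast
      fix C assume "C \<in> {S \<in> L_nfin E L. A \<subseteq> S \<and> S \<subseteq> X}" "F \<subseteq> C"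
      then show "C = F" using F(4) nfin_Lfin by blast
    qed
    then show "\<exists>S. maximal_in {S \<in> L_nfin E L. A \<subseteq> S \<and> S \<subseteq> X} S" by blast
  qed
  show ?thesis unfolding matroid_def using c1 c2 c3 c4 c5 by (intro conjI)
qed

lemma nfin_matroid_imp_nf:
  assumes m: "matroid E L" and mn: "matroid E (L_nfin E L)"
  shows "nearly_finitary E L"
  unfolding nearly_finitary_def
proof (intro allI impI, elim conjE)
  fix F B assume Fm: "maximal_in (L_fin E L) F" and Bm: "maximal_in L B" and BF: "B \<subseteq> F"
  have FL: "F \<in> L_fin E L" using Fm maximal_in_def by blast
  have FE: "F \<subseteq> E" using Lfin_E[OF FL] .
  have BL: "B \<in> L" using Bm maximal_in_def by blast
  have BN: "B \<in> L_nfin E L" using nfin_I[OF L_Lfin[OF m BL] BL] by simp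
  obtain S where S: "S \<in> L_nfin E L" "B \<subseteq> S" "S \<subseteq> F" "\<forall>T\<in>L_nfin E L. S \<subseteq> T \<longrightarrow> T \<subseteq> F \<longrightarrow> T = S"
    using m_max[OF mn BN BF FE] by blast
  have "S = F"
  proof (rule ccontr)
    assume "S \<noteq> F"
    then obtain x where x: "x \<in> F" "x \<notin> S" using S(3) by blast
    have "insert x S \<in> L_fin E L" using Lfin_down[OF FL] x S(3) by blast
    then have "insert x S \<in> L_nfin E L" using nfin_insert[OF S(1)] by blast
    then have "insert x S = S" using S(4) x S(3) by blast
    then show False using x by blast
  qed
  then obtain S' where S': "S' \<in> L" "S' \<subseteq> F" "finite (F - S')" using nfin_wit S(1) by blast
  obtain B' where B': "B' \<in> L" "S' \<subseteq> B'" "B' \<subseteq> F" "\<forall>T\<in>L. B' \<subseteq> T \<longrightarrow> T \<subseteq> F \<longrightarrow> T = B'"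
    using m_max[OF m S'(1) S'(2) FE] by blast
  have B'm: "maximal_in L B'"
  proof (rule ccontr)
    assume "\<not> maximal_in L B'"
    then obtain b where b: "b \<in> B - B'" "insert b B' \<in> L" using m_aug[OF m Bm B'(1)] by blast
    then have "insert b B' = B'" using B'(4) BF B'(3) by blast
    then show False using b by blast
  qed
  have "B - B' \<subseteq> F - S'" using BF B'(2) by blast
  then have "finite (B - B')" using S'(3) finite_subset by blast
  then have "finite (B' - B)" using base_exchange[OF m Bm B'm] by blast
  moreover have "F - B \<subseteq> (F - S') \<union> (B' - B)" using B'(2) by blast
  ultimately show "finite (F - B)" using S'(3) finite_subset by auto
qed

theorem theorem4p1p2:
  shows "(\<forall>(E::'a set) L. matroid E L \<and> nearly_finitary E L \<longrightarrow>
            (\<exists>k. k_nearly_finitary k E L))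
     \<longleftrightarrow>
         (\<forall>(E::'a set) L. matroid E L \<and> \<not> (\<exists>k. k_nearly_finitary k E L) \<longrightarrow>
            \<not> matroid E (L_nfin E L))"
proof
  assume a: "\<forall>(E::'a set) L. matroid E L \<and> nearly_finitary E L \<longrightarrow> (\<exists>k. k_nearly_finitary k E L)"
  show "\<forall>(E::'a set) L. matroid E L \<and> \<not> (\<exists>k. k_nearly_finitary k E L) \<longrightarrow> \<not> matroid E (L_nfin E L)"
  proof (intro allI impI notI, elim conjE)
    fix E :: "'a set" and L
    assume m: "matroid E L" and nk: "\<not> (\<exists>k. k_nearly_finitary k E L)" and mn: "matroid E (L_nfin E L)"
    have "nearly_finitary E L" using nfin_matroid_imp_nf[OF m mn] .
    then show False using a m nk by blast
  qed
next
  assume b: "\<forall>(E::'a set) L. matroid E L \<and> \<not> (\<exists>k. k_nearly_finitary k E L) \<longrightarrow> \<not> matroid E (L_nfin E L)"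
  show "\<forall>(E::'a set) L. matroid E L \<and> nearly_finitary E L \<longrightarrow> (\<exists>k. k_nearly_finitary k E L)"
  proof (intro allI impI, elim conjE)
    fix E :: "'a set" and L
    assume m: "matroid E L" and nf: "nearly_finitary E L"
    have "matroid E (L_nfin E L)" using nf_imp_nfin_matroid[OF m nf] .
    then show "\<exists>k. k_nearly_finitary k E L" using b m by blast
  qed
qed

end
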